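(* Let $0<\alpha<1/2$ and let $A_I=\{(x,y)\in[0,1]^2: S(x,y)\ge 2\alpha^2\}$. For every $(x,y)\in[0,1]^2\setminus\{(0,0)\}$ there exists $N\ge 0$ such that $G_\alpha^n(x,y)\in A_I$ for all $n\ge N$. Consequently every $G_\alpha$-invariant Borel probability measure $\mu$ on $[0,1]^2$ with $\mu(\{(0,0)\})=0$ satisfies $\mu(A_I)=1$.
   Context: Let $\tau:[0,1]\to[0,1]$ be the symmetric tent map, $\tau(x)=2x$ for $0\le x<1/2$ and $\tau(x)=2-2x$ for $1/2\le x\le 1$. For $0<\alpha<1$ define $G_\alpha:[0,1]^2\to[0,1]^2$ by $G_\alpha(x,y)=(y,\tau(\alpha y+(1-\alpha)x))$. Let $S(x,y)=\alpha y+(1-\alpha)x$. *)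

theory Defs
  imports "HOL-Probability.Probability"
begin

definition tent :: "real \<Rightarrow> real" where
  "tent x = (if x < 1/2 then 2 * x else 2 - 2 * x)"

definition S_map :: "real \<Rightarrow> real \<times> real \<Rightarrow> real" where
  "S_map \<alpha> p = \<alpha> * snd p + (1 - \<alpha>) * fst p"

definition G_map :: "real \<Rightarrow> real \<times> real \<Rightarrow> real \<times> real" where
  "G_map \<alpha> p = (snd p, tent (S_map \<alpha> p))"

definition unit_square :: "(real \<times> real) set" where
  "unit_square = {0..1} \<times> {0..1}"

definition A_I :: "real \<Rightarrow> (real \<times> real) set" where
  "A_I \<alpha> = {p \<in> unit_square. S_map \<alpha> p \<ge> 2 * \<alpha>\<^sup>2}"

definition invariant_borel_prob_on_square ::
  "(real \<times> real \<Rightarrow> real \<times> real) \<Rightarrow> (real \<times> real) measure \<Rightarrow> bool" where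
  "invariant_borel_prob_on_square T M \<longleftrightarrow>
     prob_space M \<and>
     space M = unit_square \<and> sets M = sets (restrict_space borel unit_square) \<and>
     T \<in> measurable M M \<and>
     (\<forall>B \<in> sets M. emeasure M (T -` B \<inter> space M) = emeasure M B)"

end

theory Submission
  imports Defs
begin


definition Rset :: "real \<Rightarrow> (real \<times> real) set" where
  "Rset a = {p \<in> unit_square. S_map a p \<ge> 2 * a\<^sup>2 \<and> 2 * a * S_map a p + (1 - a) * snd p \<ge> 2 * a\<^sup>2}"

lemma tent_range: "0 \<le> sv \<Longrightarrow> sv \<le> 1 \<Longrightarrow> 0 \<le> tent sv \<and> tent sv \<le> 1"
  by (simp add: tent_def)

lemma G_square:
  assumes a: "0 < a" "a < 1/2" and p: "p \<in> unit_square"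
  shows "G_map a p \<in> unit_square"
proof -
  obtain x y where xy: "p = (x,y)" by (cases p)
  have x: "0 \<le> x" "x \<le> 1" and y: "0 \<le> y" "y \<le> 1" using p xy by (auto simp: unit_square_def)
  have "a * y \<le> a" using a y by (simp add: mult_left_le)
  moreover have "(1-a) * x \<le> 1 - a" using a x by (simp add: mult_left_le)
  moreover have "0 \<le> a * y" "0 \<le> (1-a)*x" using a x y by auto
  ultimately have "0 \<le> S_map a p" "S_map a p \<le> 1" by (auto simp: S_map_def xy)
  then show ?thesis using tent_range y by (auto simp: G_map_def unit_square_def xy)
qed

lemma R_sub: "Rset a \<subseteq> A_I a"
  by (auto simp: Rset_def A_I_def)

lemma R_inv:
  assumes a: "0 < a" "a < 1/2" and p: "p \<in> Rset a"
  shows "G_map a p \<in> Rset a"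
proof -
  obtain x y where xy: "p = (x,y)" by (cases p)
  have ps: "p \<in> unit_square" using p by (simp add: Rset_def)
  have x: "0 \<le> x" "x \<le> 1" and y: "0 \<le> y" "y \<le> 1" using ps xy by (auto simp: unit_square_def)
  define sv where "sv = a*y + (1-a)*x"
  have L1: "sv \<ge> 2*a^2" and L2: "2*a* sv + (1-a)*y \<ge> 2*a^2"
    using p by (auto simp: Rset_def S_map_def sv_def xy)
  define t where "t = tent sv"
  have Gp: "G_map a p = (y, t)" by (simp add: G_map_def xy t_def sv_def S_map_def)
  have S': "S_map a (y,t) = a*t + (1-a)*y" by (simp add: S_map_def)
  have goal: "a*t + (1-a)*y \<ge> 2*a^2 \<and> 2*a*(a*t + (1-a)*y) + (1-a)*t \<ge> 2*a^2"
  proof (cases "sv < 1/2")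
    case True
    then have t: "t = 2* sv" by (simp add: t_def tent_def)
    have e1: "a*t + (1-a)*y = 2*a* sv + (1-a)*y" using t by simp
    have e2: "2*a*(a*t + (1-a)*y) + (1-a)*t = (2*a^2 + 1 - a)*t + 2*a*(1-a)*y"
      by (simp add: algebra_simps power2_eq_square)
    have c: "2*a^2 + 1 - a > 0" using a zero_le_power2[of a] by linarith
    have t4: "t \<ge> 4*a^2" using t L1 by simp
    have m1: "(2*a^2 + 1 - a)*t \<ge> (2*a^2 + 1 - a)*(4*a^2)" using c t4 by (simp add: mult_left_mono)
    have m2: "(2*a^2 + 1 - a)*(4*a^2) - 2*a^2 = 2*a^2*((2*a - 1/2)^2 + 3/4)"
      by (simp add: algebra_simps power2_eq_square)
    have m3: "2*a^2*((2*a - 1/2)^2 + 3/4) \<ge> 0" by simp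
    have m4: "2*a*(1-a)*y \<ge> 0" using a y by simp
    show ?thesis using e1 e2 L2 m1 m2 m3 m4 by linarith
  next
    case False
    then have t: "t = 2 - 2* sv" by (simp add: t_def tent_def)
    have h1: "(1-a)*x \<le> 1-a" using a x by (simp add: mult_left_le)
    have tb: "t \<ge> 2*a - 2*a*y" using t h1 sv_def by simp
    have m1: "a*t \<ge> a*(2*a - 2*a*y)" using tb a by (simp add: mult_left_mono)
    have c1: "1 - a - 2*a^2 > 0"
    proof -
      have "1 - a - 2*a^2 = (1-2*a)*(1+a)" by (simp add: algebra_simps power2_eq_square)
      moreover have "(1-2*a)*(1+a) > 0" using a by simp
      ultimately show ?thesis by simp
    qed
    have m2: "y*(1 - a - 2*a^2) \<ge> 0" using c1 y by simp
    have q1: "a*t + (1-a)*y \<ge> 2*a^2"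
    proof -
      have "a*(2*a - 2*a*y) + (1-a)*y = 2*a^2 + y*(1 - a - 2*a^2)"
        by (simp add: algebra_simps power2_eq_square)
      then show ?thesis using m1 m2 by linarith
    qed
    have e2: "2*a*(a*t + (1-a)*y) + (1-a)*t = (2*a^2 + 1 - a)*t + 2*a*(1-a)*y"
      by (simp add: algebra_simps power2_eq_square)
    have c: "2*a^2 + 1 - a > 0" using a zero_le_power2[of a] by linarith
    have n1: "(2*a^2 + 1 - a)*t \<ge> (2*a^2 + 1 - a)*(2*a - 2*a*y)" using c tb by (simp add: mult_left_mono)
    have n2: "(2*a^2 + 1 - a)*(2*a - 2*a*y) + 2*a*(1-a)*y = 2*a*(2*a^2+1-a) - 4*a^3*y"
      by (simp add: algebra_simps power2_eq_square power3_eq_cube)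
    have n3: "a^3*y \<le> a^3" using a y by (simp add: mult_left_le)
    have n4: "2*a*(2*a^2+1-a) - 4*a^3 - 2*a^2 = 4*a*(1/2 - a)"
      by (simp add: algebra_simps power2_eq_square power3_eq_cube)
    have n5: "4*a*(1/2 - a) \<ge> 0" using a by simp
    show ?thesis using q1 e2 n1 n2 n3 n4 n5 by linarith
  qed
  have "G_map a p \<in> unit_square" using G_square[OF a ps] .
  then show ?thesis using goal Gp S' by (simp add: Rset_def)
qed

lemma notR_grow:
  assumes a: "0 < a" "a < 1/2" and ps: "p \<in> unit_square" and pR: "p \<notin> Rset a"
  shows "fst (G_map a p) + snd (G_map a p) \<ge> min (2 - 2*a) (1 + 2*a) * (fst p + snd p)"
proof -
  obtain x y where xy: "p = (x,y)" by (cases p)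
  have x: "0 \<le> x" "x \<le> 1" and y: "0 \<le> y" "y \<le> 1" using ps xy by (auto simp: unit_square_def)
  define sv where "sv = a*y + (1-a)*x"
  have a2: "2*a^2 < a" using a by (simp add: power2_eq_square)
  have "\<not> (sv \<ge> 2*a^2 \<and> 2*a* sv + (1-a)*y \<ge> 2*a^2)"
    using pR ps by (auto simp: Rset_def S_map_def sv_def xy)
  then have "sv < a"
  proof -
    assume nn: "\<not> (sv \<ge> 2*a^2 \<and> 2*a* sv + (1-a)*y \<ge> 2*a^2)"
    then consider "sv < 2*a^2" | "2*a* sv + (1-a)*y < 2*a^2" by linarith
    then show "sv < a"
    proof cases
      case 1 then show ?thesis using a2 by linarith
    next
      case 2
      have "(1-a)*y \<ge> 0" using a y by simp
      then have "2*a* sv < 2*a*a" using 2 by (simp add: power2_eq_square)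
      then show ?thesis using a by simp
    qed
  qed
  then have t: "tent sv = 2* sv" using a by (simp add: tent_def)
  have G: "G_map a p = (y, 2* sv)" using t by (simp add: G_map_def xy S_map_def sv_def)
  define k where "k = min (2 - 2*a) (1 + 2*a)"
  have k1: "k*x \<le> (2-2*a)*x" using x by (simp add: k_def mult_right_mono)
  have k2: "k*y \<le> (1+2*a)*y" using y by (simp add: k_def mult_right_mono)
  have "y + 2* sv = (2-2*a)*x + (1+2*a)*y" by (simp add: sv_def algebra_simps)
  then show ?thesis using k1 k2 G xy k_def by (simp add: algebra_simps)
qed


lemma iter_square:
  assumes a: "0 < a" "a < 1/2" and p: "p \<in> unit_square"
  shows "(G_map a ^^ n) p \<in> unit_square"
  by (induction n) (auto intro: G_square[OF a] simp: p)

lemma iter_R: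
  assumes a: "0 < a" "a < 1/2" and p: "(G_map a ^^ N) p \<in> Rset a"
  shows "(G_map a ^^ (N + k)) p \<in> Rset a"
  by (induction k) (auto intro: R_inv[OF a] simp: p)

lemma eventually_R:
  assumes a: "0 < a" "a < 1/2" and p: "p \<in> unit_square - {(0,0)}"
  shows "\<exists>N. (G_map a ^^ N) p \<in> Rset a"
proof (rule ccontr)
  assume nR: "\<not> (\<exists>N. (G_map a ^^ N) p \<in> Rset a)"
  define k where "k = min (2 - 2*a) (1 + 2*a)"
  define V where "V = (\<lambda>q::real\<times>real. fst q + snd q)"
  have k1: "k > 1" using a by (simp add: k_def)
  have ps: "p \<in> unit_square" using p by simp
  have grow: "V ((G_map a ^^ n) p) \<ge> k^n * V p" for n
  proof (induction n)
    case 0 then show ?case by simp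
  next
    case (Suc n)
    have "V ((G_map a ^^ Suc n) p) \<ge> k * V ((G_map a ^^ n) p)"
      using notR_grow[OF a iter_square[OF a ps, of n]] nR by (simp add: V_def k_def)
    moreover have "k * V ((G_map a ^^ n) p) \<ge> k * (k^n * V p)"
      using Suc k1 by (simp add: mult_left_mono)
    ultimately show ?case by (simp add: algebra_simps)
  qed
  obtain x y where xy: "p = (x,y)" by (cases p)
  have "0 \<le> x" "0 \<le> y" "(x,y) \<noteq> (0,0)" using p xy by (auto simp: unit_square_def)
  then have Vp: "V p > 0" by (auto simp: V_def xy)
  obtain n where n: "2 / V p < k^n" using real_arch_pow[OF k1] by blast
  then have "2 < k^n * V p" using Vp by (simp add: field_simps)
  moreover have "V ((G_map a ^^ n) p) \<le> 2"
    using iter_square[OF a ps, of n] by (auto simp: V_def unit_square_def)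
  ultimately show False using grow[of n] by linarith
qed

lemma part1:
  assumes a: "0 < a" "a < 1/2" and p: "p \<in> unit_square - {(0,0)}"
  shows "\<exists>N::nat. \<forall>n \<ge> N. (G_map a ^^ n) p \<in> A_I a"
proof -
  obtain N where N: "(G_map a ^^ N) p \<in> Rset a" using eventually_R[OF a p] by blast
  show ?thesis
  proof (intro exI allI impI)
    fix n assume "N \<le> n"
    then obtain k where "n = N + k" using le_Suc_ex by blast
    then show "(G_map a ^^ n) p \<in> A_I a" using iter_R[OF a N] R_sub by blast
  qed
qed



lemma closed_in_sets:
  assumes "sets M = sets (restrict_space borel unit_square)" "closed C"
  shows "unit_square \<inter> C \<in> sets M"
  using assms by (auto simp: sets_restrict_space)

lemma cont_S: "continuous_on UNIV (S_map a)"
  unfolding S_map_def by (intro continuous_intros)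

lemma R_eq: "Rset a = unit_square \<inter> ({p. 2*a^2 \<le> S_map a p} \<inter> {p. 2*a^2 \<le> 2*a*S_map a p + (1-a)* snd p})"
  by (auto simp: Rset_def)

lemma A_eq: "A_I a = unit_square \<inter> {p. 2*a^2 \<le> S_map a p}"
  by (auto simp: A_I_def)

lemma closed_R: "closed ({p. 2*a^2 \<le> S_map a p} \<inter> {p. 2*a^2 \<le> 2*a*S_map a p + (1-a)* snd p})"
  unfolding S_map_def by (intro closed_Int closed_Collect_le continuous_intros)

lemma closed_A: "closed {p. 2*a^2 \<le> S_map a p}"
  unfolding S_map_def by (intro closed_Collect_le continuous_intros)

lemma part2:
  assumes a: "0 < a" "a < 1/2"
    and inv: "invariant_borel_prob_on_square (G_map a) M" and z: "emeasure M {(0, 0)} = 0"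
  shows "emeasure M (A_I a) = 1"
proof -
  let ?G = "G_map a"
  have P: "prob_space M" and sp: "space M = unit_square"
    and st: "sets M = sets (restrict_space borel unit_square)"
    and Gm: "?G \<in> measurable M M"
    and Gi: "\<And>B. B \<in> sets M \<Longrightarrow> emeasure M (?G -` B \<inter> space M) = emeasure M B"
    using inv unfolding invariant_borel_prob_on_square_def by auto
  have Rs: "Rset a \<in> sets M" unfolding R_eq by (rule closed_in_sets[OF st closed_R])
  have As: "A_I a \<in> sets M" unfolding A_eq by (rule closed_in_sets[OF st closed_A])
  have zs: "{(0,0)} \<in> sets M"
  proof -
    have "{(0::real,0::real)} = unit_square \<inter> {(0,0)}" by (auto simp: unit_square_def)
    then show ?thesis using closed_in_sets[OF st, of "{(0,0)}"] by simp
  qed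
  have Gnm: "(?G ^^ n) \<in> measurable M M" for n
  proof (induction n)
    case 0 then show ?case by simp
  next
    case (Suc n) then show ?case using Gm by (simp add: measurable_comp)
  qed
  have Gnsp: "(?G ^^ n) q \<in> space M" if "q \<in> space M" for n q
    using that sp iter_square[OF a] by simp
  have Gni: "emeasure M ((?G ^^ n) -` B \<inter> space M) = emeasure M B" if "B \<in> sets M" for n B
    using that
  proof (induction n arbitrary: B)
    case 0 then show ?case by (simp add: sets.Int_space_eq2)
  next
    case (Suc n)
    have "(?G ^^ Suc n) -` B \<inter> space M = (?G ^^ n) -` (?G -` B \<inter> space M) \<inter> space M"
      using Gnsp by auto
    moreover have "?G -` B \<inter> space M \<in> sets M" using Gm Suc.prems by (rule measurable_sets)
    ultimately have "emeasure M ((?G ^^ Suc n) -` B \<inter> space M) = emeasure M (?G -` B \<inter> space M)"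
      using Suc.IH by presburger
    then show ?case using Gi Suc.prems by (simp add: comp_def)
  qed
  define E where "E n = (?G ^^ n) -` Rset a \<inter> space M" for n
  have Es: "range E \<subseteq> sets M" unfolding E_def using Gnm Rs by (auto intro: measurable_sets)
  have Einc: "incseq E"
  proof (rule incseq_SucI)
    fix n show "E n \<subseteq> E (Suc n)"
      using R_inv[OF a] by (auto simp: E_def)
  qed
  have G0: "(?G ^^ n) (0,0) = (0,0)" for n
    by (induction n) (auto simp: G_map_def S_map_def tent_def)
  have EU: "(\<Union>n. E n) = space M - {(0,0)}"
  proof
    show "(\<Union>n. E n) \<subseteq> space M - {(0,0)}"
      using G0 a by (auto simp: E_def Rset_def S_map_def)
    show "space M - {(0,0)} \<subseteq> (\<Union>n. E n)"
    proof
      fix q assume q: "q \<in> space M - {(0,0)}"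
      then obtain N where "(?G ^^ N) q \<in> Rset a" using eventually_R[OF a, of q] sp by auto
      then show "q \<in> (\<Union>n. E n)" using q by (auto simp: E_def)
    qed
  qed
  have "(SUP n. emeasure M (E n)) = emeasure M (\<Union>n. E n)"
    by (rule SUP_emeasure_incseq[OF Es Einc])
  moreover have "emeasure M (E n) = emeasure M (Rset a)" for n
    unfolding E_def by (rule Gni[OF Rs])
  moreover have "emeasure M (space M - {(0,0)}) = 1"
    using emeasure_Diff[of M "{(0,0)}" "space M"] z zs prob_space.emeasure_space_1[OF P] sp
      sets.top[of M] by (simp add: unit_square_def)
  ultimately have R1: "emeasure M (Rset a) = 1" using EU by simp
  have "emeasure M (Rset a) \<le> emeasure M (A_I a)" using R_sub As by (rule emeasure_mono)
  moreover have "emeasure M (A_I a) \<le> 1"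
    using prob_space.emeasure_le_1[OF P] by simp
  ultimately show ?thesis using R1 by simp
qed


theorem proposition5:
  fixes \<alpha> :: real
  assumes "0 < \<alpha>" and "\<alpha> < 1/2"
  shows "(\<forall>p \<in> unit_square - {(0, 0)}. \<exists>N::nat. \<forall>n \<ge> N. (G_map \<alpha> ^^ n) p \<in> A_I \<alpha>)
       \<and> (\<forall>M. invariant_borel_prob_on_square (G_map \<alpha>) M \<and> emeasure M {(0, 0)} = 0
               \<longrightarrow> emeasure M (A_I \<alpha>) = 1)"
  using part1[OF assms] part2[OF assms] by blast

end
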